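(* Let $N\ge 2$ be an integer and let $\Delta_N=\{p=(p_1,\dots,p_N)\in[0,1]^N:\ \sum_{i=1}^N p_i=1\}$ be the set of discrete probability distributions on $N$ points. For $p\in\Delta_N$ define the normalized Shannon entropy $$H(p)=\frac{1}{\log N}\Big(-\sum_{i=1}^N p_i\log p_i\Big)\quad(\text{with }0\log 0=0),$$ the disequilibrium $$D_{SQ}(p)=\sum_{i=1}^N\Big(p_i-\frac1N\Big)^2,$$ and the statistical complexity $C_{SQ}(p)=H(p)\,D_{SQ}(p)$. Then the maximum of $C_{SQ}$ over $\Delta_N$ is achieved on a distribution of the form $$p_k=p_{\max},\qquad p_i=\frac{1-p_{\max}}{N-1}\ \text{ for all } i\in\{1,\dots,N\}\setminus\{k\},$$ for some index $k\in\{1,\dots,N\}$ and some constant $p_{\max}\in[0,1]$; that is, at the appearance of a single component of arbitrary index $k$ over a uniform distribution of the remaining components.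
   Context: Logarithms are taken in a fixed base; the base cancels in the normalization of $H$. *)

theory Defs
  imports Complex_Main
begin

text \<open>Probability simplex on the index set {1..N}; values outside {1..N} are irrelevant.\<close>
definition prob_simplex :: "nat \<Rightarrow> (nat \<Rightarrow> real) set" where
  "prob_simplex N = {p. (\<forall>i\<in>{1..N}. 0 \<le> p i \<and> p i \<le> 1) \<and> (\<Sum>i=1..N. p i) = 1}"

text \<open>x log x with the convention 0 log 0 = 0 (natural log; the base cancels in H).\<close>
definition xlogx :: "real \<Rightarrow> real" where
  "xlogx x = (if x = 0 then 0 else x * ln x)"

definition norm_entropy :: "nat \<Rightarrow> (nat \<Rightarrow> real) \<Rightarrow> real" where
  "norm_entropy N p = (- (\<Sum>i=1..N. xlogx (p i))) / ln (real N)"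

definition diseq_SQ :: "nat \<Rightarrow> (nat \<Rightarrow> real) \<Rightarrow> real" where
  "diseq_SQ N p = (\<Sum>i=1..N. (p i - 1 / real N)^2)"

definition complexity_SQ :: "nat \<Rightarrow> (nat \<Rightarrow> real) \<Rightarrow> real" where
  "complexity_SQ N p = norm_entropy N p * diseq_SQ N p"

end

theory Submission
  imports Defs "HOL-Analysis.Analysis"
begin


lemma ln_cubic_bound:
  fixes t :: real
  assumes "t > -1"
  shows "ln (1 + t) \<le> t - t^2/2 + t^3/3"
proof -
  define f where "f = (\<lambda>t::real. t - t^2/2 + t^3/3 - ln (1 + t))"
  have D: "DERIV f x :> x^3 / (1 + x)" if "x > -1" for x
  proof -
    have "DERIV f x :> 1 - x + x^2 - 1 / (1 + x)"
      unfolding f_def using that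
      by (auto intro!: derivative_eq_intros simp: power2_eq_square field_simps)
    moreover have "1 - x + x^2 - 1 / (1 + x) = x^3 / (1 + x)"
      using that by (simp add: field_simps power2_eq_square power3_eq_cube)
    ultimately show ?thesis by simp
  qed
  have f0: "f 0 = 0" by (simp add: f_def)
  have "f t \<ge> 0"
  proof (cases "t \<ge> 0")
    case True
    have "f 0 \<le> f t"
      apply (rule DERIV_nonneg_imp_nondecreasing[OF True])
      subgoal for x using D[of x] by (intro exI[of _ "x^3/(1+x)"]) auto
      done
    then show ?thesis using f0 by simp
  next
    case False
    have "f 0 \<le> f t"
      apply (rule DERIV_nonpos_imp_nonincreasing[of t 0])
      using False apply simp
      subgoal for x
      proof -
        assume x: "t \<le> x" "x \<le> 0"
        have "x * x^2 \<le> 0" using x by (simp add: mult_nonpos_nonneg)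
        then have "x^3 / (1 + x) \<le> 0" using x assms
          by (intro divide_nonpos_pos) (auto simp: power3_eq_cube power2_eq_square)
        then show ?thesis using D[of x] x assms by (intro exI[of _ "x^3/(1+x)"]) auto
      qed
      done
    then show ?thesis using f0 by simp
  qed
  then show ?thesis by (simp add: f_def)
qed



definition Kset :: "nat \<Rightarrow> (nat \<Rightarrow> real) set" where
  "Kset N = {p. (\<forall>i\<in>{1..N}. 0 \<le> p i \<and> p i \<le> 1) \<and> (\<Sum>i=1..N. p i) = 1 \<and> (\<forall>i. i \<notin> {1..N} \<longrightarrow> p i = 0)}"

lemma xlogx_eq: "xlogx x = x * ln x"
  by (simp add: xlogx_def)

lemma cont_xlnx: "continuous_on {0..1} (\<lambda>x::real. x * ln x)"
  unfolding continuous_on_def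
proof
  fix x :: real assume x: "x \<in> {0..1}"
  show "((\<lambda>x. x * ln x) \<longlongrightarrow> x * ln x) (at x within {0..1})"
  proof (cases "x = 0")
    case True
    have "((\<lambda>y::real. - (ln y / y)) \<longlongrightarrow> 0) at_top"
      using tendsto_minus[OF ln_x_over_x_tendsto_0] by simp
    then have "((\<lambda>y::real. inverse y * ln (inverse y)) \<longlongrightarrow> 0) at_top"
      apply (rule Lim_transform_eventually)
      using eventually_gt_at_top[of "0::real"]
      by eventually_elim (simp add: ln_inverse divide_inverse mult.commute)
    then have "((\<lambda>x::real. x * ln x) \<longlongrightarrow> 0) (at_right 0)"
      unfolding filterlim_at_right_to_top by simp
    then show ?thesis using True by (simp add: at_within_Icc_at_right)
  next
    case False
    then have "isCont (\<lambda>x. x * ln x) x" using x by (auto intro!: continuous_intros)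
    then show ?thesis
      using continuous_at_imp_continuous_at_within continuous_within by blast
  qed
qed

lemma compact_Kset: "compact (Kset N)"
proof -
  define S where "S = (\<lambda>i::nat. if i \<in> {1..N} then {0..1::real} else {0})"
  have "compactin (product_topology (\<lambda>i. euclideanreal) UNIV) (PiE UNIV S)"
    by (simp add: compactin_PiE S_def)
  then have c1: "compact (PiE UNIV S)"
    by (simp add: euclidean_product_topology)
  have "continuous_on UNIV (\<lambda>p::nat\<Rightarrow>real. \<Sum>i=1..N. p i)"
    by (intro continuous_intros) simp
  then have c2: "closed {p::nat\<Rightarrow>real. (\<Sum>i=1..N. p i) = 1}"
    using closed_Collect_eq[of "\<lambda>p::nat\<Rightarrow>real. \<Sum>i=1..N. p i" "\<lambda>_. 1"] by simp
  have "Kset N = PiE UNIV S \<inter> {p. (\<Sum>i=1..N. p i) = 1}"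
    unfolding Kset_def S_def by (auto simp: PiE_iff) (drule_tac x=i in spec, simp)+
  then show ?thesis using c1 c2 compact_Int_closed by simp
qed

lemma cont_complexity: "continuous_on (Kset N) (complexity_SQ N)"
proof -
  have cj: "continuous_on (Kset N) (\<lambda>p. p i)" for i
    by (rule continuous_on_subset[OF continuous_on_product_coordinates]) simp
  have ci: "continuous_on (Kset N) (\<lambda>p. p i * ln (p i))" if "i \<in> {1..N}" for i
  proof -
    have "(\<lambda>p. p i) ` Kset N \<subseteq> {0..1}" using that by (auto simp: Kset_def)
    from continuous_on_compose2[OF cont_xlnx cj this] show ?thesis .
  qed
  have s1: "continuous_on (Kset N) (\<lambda>p. \<Sum>i=1..N. p i * ln (p i))"
    by (rule continuous_on_sum) (use ci in auto)
  have s2: "continuous_on (Kset N) (\<lambda>p. \<Sum>i=1..N. (p i - 1 / real N)^2)"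
    by (intro continuous_on_sum continuous_intros cj)
  have eq: "complexity_SQ N = (\<lambda>p. (- (\<Sum>i=1..N. p i * ln (p i))) * (1 / ln (real N)) * (\<Sum>i=1..N. (p i - 1 / real N)^2))"
    by (auto simp: complexity_SQ_def norm_entropy_def diseq_SQ_def xlogx_eq fun_eq_iff)
  show ?thesis unfolding eq
    by (intro continuous_on_mult continuous_on_minus s1 s2 continuous_on_const)
qed

lemma exists_max:
  assumes "N \<ge> 1"
  shows "\<exists>p\<in>Kset N. \<forall>q\<in>Kset N. complexity_SQ N q \<le> complexity_SQ N p"
proof (rule continuous_attains_sup[OF compact_Kset _ cont_complexity])
  have "(\<lambda>i. if i = 1 then 1 else 0) \<in> Kset N"
    using assms unfolding Kset_def by (auto simp: sum.delta)
  then show "Kset N \<noteq> {}" by blast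
qed



lemma sum_upd2:
  fixes f :: "real \<Rightarrow> real"
  assumes "finite A" "a \<in> A" "b \<in> A" "a \<noteq> b"
  shows "(\<Sum>i\<in>A. f ((p(a := x, b := y)) i)) = (\<Sum>i\<in>A. f (p i)) - f (p a) - f (p b) + f x + f y"
proof -
  have A: "A = insert a (insert b (A - {a} - {b}))" using assms by auto
  have "(\<Sum>i\<in>A. f ((p(a := x, b := y)) i)) = f x + f y + (\<Sum>i\<in>A - {a} - {b}. f ((p(a := x, b := y)) i))"
    using assms by (subst A) (simp add: sum.insert_remove)
  also have "(\<Sum>i\<in>A - {a} - {b}. f ((p(a := x, b := y)) i)) = (\<Sum>i\<in>A - {a} - {b}. f (p i))"
    by (rule sum.cong) auto
  moreover have "(\<Sum>i\<in>A. f (p i)) = f (p a) + f (p b) + (\<Sum>i\<in>A - {a} - {b}. f (p i))"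
    using assms by (subst A) (simp add: sum.insert_remove)
  ultimately show ?thesis by simp
qed

definition Ent :: "nat \<Rightarrow> (nat \<Rightarrow> real) \<Rightarrow> real" where
  "Ent N p = - (\<Sum>i=1..N. p i * ln (p i))"

definition FF :: "nat \<Rightarrow> (nat \<Rightarrow> real) \<Rightarrow> real" where
  "FF N p = Ent N p * diseq_SQ N p"

lemma complexity_FF: "complexity_SQ N p = FF N p / ln (real N)"
  by (simp add: complexity_SQ_def norm_entropy_def FF_def Ent_def xlogx_eq)

lemma Ent_upd:
  assumes "a \<in> {1..N}" "b \<in> {1..N}" "a \<noteq> b"
  shows "Ent N (p(a := x, b := y)) = Ent N p + p a * ln (p a) + p b * ln (p b) - x * ln x - y * ln y"
  using sum_upd2[of "{1..N}" a b "\<lambda>z. z * ln z" p x y] assms by (simp add: Ent_def)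

lemma D_upd:
  assumes "a \<in> {1..N}" "b \<in> {1..N}" "a \<noteq> b"
  shows "diseq_SQ N (p(a := x, b := y)) = diseq_SQ N p - (p a - 1 / real N)^2 - (p b - 1 / real N)^2
            + (x - 1 / real N)^2 + (y - 1 / real N)^2"
  using sum_upd2[of "{1..N}" a b "\<lambda>z. (z - 1 / real N)^2" p x y] assms by (simp add: diseq_SQ_def)

lemma sum_upd:
  fixes p :: "nat \<Rightarrow> real"
  assumes "a \<in> {1..N}" "b \<in> {1..N}" "a \<noteq> b"
  shows "(\<Sum>i=1..N. (p(a := x, b := y)) i) = (\<Sum>i=1..N. p i) - p a - p b + x + y"
  using sum_upd2[of "{1..N}" a b "\<lambda>z. z" p x y] assms by simp

lemma Kset_upd:
  assumes "p \<in> Kset N" "a \<in> {1..N}" "b \<in> {1..N}" "a \<noteq> b"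
    "0 \<le> x" "x \<le> 1" "0 \<le> y" "y \<le> 1" "x + y = p a + p b"
  shows "p(a := x, b := y) \<in> Kset N"
  using assms sum_upd[OF assms(2-4), of p x y] unfolding Kset_def by auto

lemma ln_strict: "0 < (x::real) \<Longrightarrow> x \<noteq> 1 \<Longrightarrow> ln x < x - 1"
  using ln_le_minus_one[of x] ln_eq_minus_one[of x] by fastforce

lemma ln2_ge: "ln (2::real) \<ge> 2/3"
proof -
  have "ln (1 + (-1/2::real)) \<le> (-1/2) - (-1/2)^2/2 + (-1/2)^3/3"
    by (rule ln_cubic_bound) simp
  then have "ln (1/2::real) \<le> -2/3" by (simp add: power2_eq_square power3_eq_cube)
  then show ?thesis by (simp add: ln_div)
qed

lemma Delta_bound:
  fixes M :: real assumes "M > 0"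
  shows "(6*M/5) * ln (6*M/5) + (4*M/5) * ln (4*M/5) - 2*M*ln M \<le> 77*M/1875"
proof -
  have l1: "ln (1 + (1/5::real)) \<le> 1/5 - (1/5)^2/2 + (1/5)^3/3" by (rule ln_cubic_bound) simp
  have l2: "ln (1 + (-1/5::real)) \<le> -1/5 - (-1/5)^2/2 + (-1/5)^3/3" by (rule ln_cubic_bound) simp
  have e1: "ln (6*M/5) = ln M + ln (1 + 1/5)"
  proof -
    have "ln (M * (1 + 1/5)) = ln M + ln (1 + 1/5)" by (rule ln_mult_pos) (use assms in auto)
    moreover have "M * (1 + 1/5) = 6*M/5" by simp
    ultimately show ?thesis by metis
  qed
  have e2: "ln (4*M/5) = ln M + ln (1 + (-1/5))"
  proof -
    have "ln (M * (1 + (-1/5))) = ln M + ln (1 + (-1/5))" by (rule ln_mult_pos) (use assms in auto)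
    moreover have "M * (1 + (-1/5)) = 4*M/5" by simp
    ultimately show ?thesis by metis
  qed
  have "(6*M/5) * ln (6*M/5) + (4*M/5) * ln (4*M/5) - 2*M*ln M
        = M * ((6/5) * ln (1 + 1/5) + (4/5) * ln (1 + (-1/5)))"
    unfolding e1 e2 by (simp add: algebra_simps)
  also have "\<dots> \<le> M * ((6/5) * (1/5 - (1/5)^2/2 + (1/5)^3/3) + (4/5) * (-1/5 - (-1/5)^2/2 + (-1/5)^3/3))"
    using l1 l2 assms by (intro mult_left_mono add_mono) auto
  also have "\<dots> = 77*M/1875" by (simp add: power2_eq_square power3_eq_cube)
  finally show ?thesis .
qed



locale mx =
  fixes N :: nat and p :: "nat \<Rightarrow> real"
  assumes N2: "N \<ge> 2" and pK: "p \<in> Kset N" and pmax: "\<And>q. q \<in> Kset N \<Longrightarrow> FF N q \<le> FF N p"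
begin

lemma p01: "i \<in> {1..N} \<Longrightarrow> 0 \<le> p i \<and> p i \<le> 1"
  using pK by (auto simp: Kset_def)

lemma psum: "(\<Sum>i=1..N. p i) = 1"
  using pK by (auto simp: Kset_def)

lemma pair_le:
  assumes "a \<in> {1..N}" "b \<in> {1..N}" "a \<noteq> b"
  shows "p a + p b \<le> 1"
proof -
  have "0 \<le> (\<Sum>i=1..N. (p(a := 0, b := 0)) i)"
    using p01 by (intro sum_nonneg) auto
  also have "\<dots> = 1 - p a - p b" using sum_upd[OF assms, of p 0 0] psum by simp
  finally show ?thesis by simp
qed

lemma Ent_nonneg_gen:
  assumes "\<And>i. i \<in> {1..N} \<Longrightarrow> 0 \<le> q i \<and> q i \<le> 1"
  shows "Ent N q \<ge> 0"
proof -
  have "q i * ln (q i) \<le> 0" if "i \<in> {1..N}" for i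
  proof (cases "q i = 0")
    case False
    then have "ln (q i) \<le> 0" using assms[OF that] by simp
    then show ?thesis using assms[OF that] by (simp add: mult_nonneg_nonpos)
  qed simp
  then have "(\<Sum>i=1..N. q i * ln (q i)) \<le> 0" by (intro sum_nonpos) auto
  then show ?thesis by (simp add: Ent_def)
qed

lemma E_nonneg: "Ent N p \<ge> 0"
  using Ent_nonneg_gen p01 by blast

lemma D_nonneg: "diseq_SQ N p \<ge> 0"
  unfolding diseq_SQ_def by (intro sum_nonneg) auto

lemma FF_pos: "FF N p > 0"
proof -
  define q where "q = (\<lambda>_::nat. 0::real)(1 := 2/3, 2 := 1/3)"
  have in1: "(1::nat) \<in> {1..N}" "(2::nat) \<in> {1..N}" "(1::nat) \<noteq> 2" using N2 by auto
  have qK: "q \<in> Kset N"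
  proof -
    have "(\<Sum>i=1..N. q i) = 1" unfolding q_def using sum_upd[OF in1, of "\<lambda>_. 0" "2/3" "1/3"] by simp
    moreover have "\<forall>i\<in>{1..N}. 0 \<le> q i \<and> q i \<le> 1" by (auto simp: q_def)
    moreover have "\<forall>i. i \<notin> {1..N} \<longrightarrow> q i = 0" using in1 by (auto simp: q_def)
    ultimately show ?thesis by (simp add: Kset_def)
  qed
  have E0: "Ent N (\<lambda>_. 0) = 0" by (simp add: Ent_def)
  have "Ent N q = - (2/3) * ln (2/3) - (1/3) * ln (1/3)"
    unfolding q_def using Ent_upd[OF in1, of "\<lambda>_. 0" "2/3" "1/3"] E0 by simp
  moreover have "(2/3) * ln (2/3::real) < 0" by (rule mult_pos_neg) simp_all
  moreover have "(1/3) * ln (1/3::real) < 0" by (rule mult_pos_neg) simp_all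
  ultimately have Eq: "Ent N q > 0" by linarith
  define r where "r = 1 / real N"
  have r: "0 < r" "r \<le> 1/2" using N2 by (auto simp: r_def field_simps)
  have D0: "diseq_SQ N (\<lambda>_. 0) = real N * r^2" by (simp add: diseq_SQ_def r_def)
  have "diseq_SQ N q = real N * r^2 - 2 * r^2 + (2/3 - r)^2 + (1/3 - r)^2"
    unfolding q_def using D_upd[OF in1, of "\<lambda>_. 0" "2/3" "1/3"] D0 by (simp add: r_def)
  also have "real N * r^2 = r" using N2 by (simp add: r_def power2_eq_square)
  finally have "diseq_SQ N q = r - 2 * r^2 + (2/3 - r)^2 + (1/3 - r)^2" .
  moreover have "r - 2 * r^2 \<ge> 0" using r by (simp add: power2_eq_square)
  moreover have "(2/3 - r)^2 > 0" using r by simp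
  ultimately have Dq: "diseq_SQ N q > 0" by (smt (verit) zero_le_power2)
  have "FF N q > 0" using Eq Dq by (simp add: FF_def)
  then show ?thesis using pmax[OF qK] by simp
qed

lemma E_pos: "Ent N p > 0" and D_pos: "diseq_SQ N p > 0"
  using FF_pos E_nonneg D_nonneg unfolding FF_def
  by (metis less_eq_real_def mult_eq_0_iff)+

definition M where "M = Max (p ` {1..N})"

lemma le_M: "i \<in> {1..N} \<Longrightarrow> p i \<le> M"
  unfolding M_def by (intro Max_ge) auto

lemma M_attained: "\<exists>k\<in>{1..N}. p k = M"
proof -
  have "M \<in> p ` {1..N}" unfolding M_def using N2 by (intro Max_in) auto
  then show ?thesis by auto
qed

lemma M_pos: "M > 0"
proof -
  have "1 = (\<Sum>i=1..N. p i)" using psum by simp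
  also have "\<dots> \<le> (\<Sum>i=1..N. M)" using le_M by (intro sum_mono) auto
  also have "\<dots> = real N * M" by simp
  finally have "1 \<le> real N * M" .
  then show ?thesis using N2 by (smt (verit) mult_nonneg_nonpos of_nat_0_le_iff)
qed

lemma M_le1: "M \<le> 1"
proof -
  obtain k where "k \<in> {1..N}" "p k = M" using M_attained by blast
  then show ?thesis using p01[of k] by simp
qed

lemma D_eq: "diseq_SQ N p = (\<Sum>i=1..N. (p i)^2) - 1 / real N"
proof -
  have "diseq_SQ N p = (\<Sum>i=1..N. (p i)^2 - (2 / real N) * p i + 1 / (real N)^2)"
    unfolding diseq_SQ_def by (rule sum.cong) (auto simp: power2_eq_square field_simps)
  also have "\<dots> = (\<Sum>i=1..N. (p i)^2) - (2 / real N) * (\<Sum>i=1..N. p i) + real N / (real N)^2"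
    by (simp add: sum.distrib sum_subtractf sum_distrib_left)
  also have "\<dots> = (\<Sum>i=1..N. (p i)^2) - 1 / real N"
    using psum N2 by (simp add: power2_eq_square field_simps)
  finally show ?thesis .
qed

lemma D_lt_M: "diseq_SQ N p < M"
proof -
  have "(\<Sum>i=1..N. (p i)^2) \<le> (\<Sum>i=1..N. M * p i)"
    using le_M p01 by (intro sum_mono) (auto simp: power2_eq_square intro: mult_right_mono)
  also have "\<dots> = M" using psum by (simp add: sum_distrib_left[symmetric])
  moreover have "1 / real N > 0" using N2 by simp
  ultimately show ?thesis using D_eq by linarith
qed


lemma pos:
  assumes i: "i \<in> {1..N}"
  shows "p i > 0"
proof (rule ccontr)
  assume "\<not> p i > 0"
  then have pi0: "p i = 0" using p01[OF i] by linarith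
  obtain k where k: "k \<in> {1..N}" "p k = M" using M_attained by blast
  have ik: "i \<noteq> k" using pi0 k M_pos by auto
  define E where "E = Ent N p"
  define D where "D = diseq_SQ N p"
  have E0: "E > 0" and D0: "D > 0" using E_pos D_pos by (simp_all add: E_def D_def)
  have MP: "M > 0" "M \<le> 1" using M_pos M_le1 by auto
  define a where "a = 4 * M * E / D"
  have a0: "a > 0" using E0 D0 MP by (simp add: a_def)
  define e where "e = min (M/2) (min (D / (4*M)) (M/4 * exp (-a)))"
  have e0: "e > 0" using MP D0 by (simp add: e_def)
  have e1: "e \<le> M/2" and e2: "e \<le> D / (4*M)" and e3: "e \<le> M/4 * exp (-a)"
    by (simp_all add: e_def)
  define q where "q = p(i := p i + e, k := p k - e)"
  have qK: "q \<in> Kset N" unfolding q_def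
    by (rule Kset_upd[OF pK i k(1) ik]) (use pi0 k e0 e1 MP in auto)
  define Del where "Del = M * ln M - e * ln e - (M - e) * ln (M - e)"
  have Eq: "Ent N q = E + Del"
    unfolding q_def Del_def E_def using Ent_upd[OF i k(1) ik, of p "p i + e" "p k - e"] pi0 k by simp
  have Dq: "diseq_SQ N q = D + 2 * e^2 - 2 * e * M"
    unfolding q_def D_def using D_upd[OF i k(1) ik, of p "p i + e" "p k - e"] pi0 k
    by (simp add: power2_eq_square algebra_simps)
  have Me: "M - e \<ge> M/2" "M - e > 0" using e1 MP by auto
  have L1: "ln (M - e) - ln M \<le> - e / M"
  proof -
    have "ln ((M - e) / M) \<le> (M - e) / M - 1" using Me MP by (intro ln_le_minus_one) simp
    also have "\<dots> = - e / M" using MP by (simp add: field_simps)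
    finally show ?thesis using Me MP by (simp add: ln_divide_pos)
  qed
  have L2: "M * ln M - (M - e) * ln (M - e) \<ge> e + e * ln (M - e)"
  proof -
    have "M * (ln M - ln (M - e)) \<ge> M * (e / M)" using L1 MP by (intro mult_left_mono) auto
    then have "M * (ln M - ln (M - e)) \<ge> e" using MP by simp
    then show ?thesis by (simp add: algebra_simps)
  qed
  have L3: "ln (M - e) \<ge> ln (M/2)" using Me MP by simp
  have L4: "ln (M/2) - ln e \<ge> ln 2 + a"
  proof -
    have "4 * e * exp a \<le> M * exp (-a) * exp a" using e3 by (simp add: mult.commute)
    also have "\<dots> = M" by (simp add: exp_minus field_simps)
    finally have "2 * exp a \<le> (M/2) / e" using e0 by (simp add: field_simps)
    then have "ln (2 * exp a) \<le> ln ((M/2) / e)" using e0 MP by (subst ln_le_cancel_iff) auto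
    then show ?thesis using e0 MP by (simp add: ln_mult_pos ln_divide_pos)
  qed
  have ln2: "ln (2::real) \<ge> 0" by simp
  have DelL: "Del \<ge> e + e * a"
  proof -
    have "Del \<ge> e + e * (ln (M - e) - ln e)" using L2 unfolding Del_def by (simp add: algebra_simps)
    moreover have "ln (M - e) - ln e \<ge> a" using L3 L4 ln2 by linarith
    ultimately show ?thesis using e0 by (smt (verit) mult_left_mono)
  qed
  have Del0: "Del > e * a" using DelL e0 by linarith
  have DD: "D + 2 * e^2 - 2 * e * M \<ge> D / 2"
  proof -
    have "2 * e * M \<le> 2 * (D / (4*M)) * M" using e2 MP by (intro mult_right_mono) auto
    also have "\<dots> = D / 2" using MP by (simp add: field_simps)
    finally have "2 * e * M \<le> D / 2" .
    moreover have "0 \<le> e^2" by simp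
    ultimately show ?thesis by linarith
  qed
  have "FF N q = (E + Del) * (D + 2 * e^2 - 2 * e * M)" by (simp add: FF_def Eq Dq)
  also have "\<dots> = E * D + Del * (D + 2 * e^2 - 2 * e * M) + E * (2 * e^2 - 2 * e * M)"
    by (simp add: algebra_simps)
  finally have FFq: "FF N q = E * D + Del * (D + 2 * e^2 - 2 * e * M) + E * (2 * e^2 - 2 * e * M)" .
  have t1: "Del * (D + 2 * e^2 - 2 * e * M) \<ge> Del * (D / 2)"
    using DD Del0 e0 a0 by (intro mult_left_mono) (auto intro: less_imp_le order.trans[OF mult_nonneg_nonneg])
  have t2: "Del * (D / 2) > (e * a) * (D / 2)" using Del0 D0 by (intro mult_strict_right_mono) auto
  have t3: "(e * a) * (D / 2) = 2 * e * M * E" using D0 by (simp add: a_def field_simps)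
  have t4: "E * (2 * e^2 - 2 * e * M) \<ge> E * (- 2 * e * M)"
    using E0 by (intro mult_left_mono) auto
  have t5: "E * (- 2 * e * M) = - (2 * e * M * E)" by (simp add: algebra_simps)
  have "FF N q > E * D" using FFq t1 t2 t3 t4 t5 by linarith
  then show False using pmax[OF qK] by (simp add: FF_def E_def D_def)
qed

lemma E_ge: "Ent N p \<ge> - ln M"
proof -
  have "(\<Sum>i=1..N. p i * ln (p i)) \<le> (\<Sum>i=1..N. p i * ln M)"
  proof (rule sum_mono)
    fix i assume i: "i \<in> {1..N}"
    have "ln (p i) \<le> ln M" using pos[OF i] le_M[OF i] by simp
    then show "p i * ln (p i) \<le> p i * ln M" using pos[OF i] by (intro mult_left_mono) auto
  qed
  also have "\<dots> = ln M" using psum by (simp add: sum_distrib_right[symmetric])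
  finally show ?thesis by (simp add: Ent_def)
qed

lemma uniq:
  assumes k: "k \<in> {1..N}" "p k = M" and j: "j \<in> {1..N}" "j \<noteq> k"
  shows "p j < M"
proof (rule ccontr)
  assume "\<not> p j < M"
  then have pj: "p j = M" using le_M[OF j(1)] by simp
  have M2: "M \<le> 1/2" using pair_le[OF k(1) j(1) j(2)[symmetric]] k pj by simp
  have MP: "M > 0" using M_pos .
  define E where "E = Ent N p"
  define D where "D = diseq_SQ N p"
  have jk: "k \<noteq> j" using j by auto
  define q where "q = p(k := p k + M/5, j := p j - M/5)"
  have qK: "q \<in> Kset N" unfolding q_def
    by (rule Kset_upd[OF pK k(1) j(1) jk]) (use k pj MP M2 in auto)
  define Del where "Del = 2 * M * ln M - (6*M/5) * ln (6*M/5) - (4*M/5) * ln (4*M/5)"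
  have Eq: "Ent N q = E + Del"
  proof -
    have "Ent N q = E + M * ln M + M * ln M - (M + M/5) * ln (M + M/5) - (M - M/5) * ln (M - M/5)"
      unfolding q_def E_def using Ent_upd[OF k(1) j(1) jk, of p "p k + M/5" "p j - M/5"] k pj by simp
    moreover have "M + M/5 = 6*M/5" "M - M/5 = 4*M/5" by simp_all
    ultimately show ?thesis unfolding Del_def by simp
  qed
  have Dq: "diseq_SQ N q = D + 2 * (M/5)^2"
    unfolding q_def D_def using D_upd[OF k(1) j(1) jk, of p "p k + M/5" "p j - M/5"] k pj
    by (simp add: power2_eq_square algebra_simps)
  have DelB: "Del \<ge> - (77 * M / 1875)" using Delta_bound[OF MP] unfolding Del_def by linarith
  have Eb: "E \<ge> 2/3"
  proof -
    have "ln M \<le> ln (1/2)" using MP M2 by simp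
    then have "- ln M \<ge> ln 2" by (simp add: ln_div)
    then show ?thesis using E_ge ln2_ge unfolding E_def by linarith
  qed
  have DM: "D < M" "D \<ge> 0" using D_lt_M D_nonneg by (simp_all add: D_def)
  have "FF N q = (E + Del) * (D + 2 * (M/5)^2)" by (simp add: FF_def Eq Dq)
  also have "\<dots> = E * D + Del * (D + 2 * (M/5)^2) + E * (2 * (M/5)^2)" by (simp add: algebra_simps)
  finally have FFq: "FF N q = E * D + Del * (D + 2 * (M/5)^2) + E * (2 * (M/5)^2)" .
  have s0: "D + 2 * (M/5)^2 \<le> M + M/25"
  proof -
    have "2 * (M/5)^2 = (2*M/25) * M" by (simp add: power2_eq_square)
    also have "\<dots> \<le> (2*(1/2)/25) * M" using M2 MP by (intro mult_right_mono) auto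
    finally show ?thesis using DM by simp
  qed
  have s1: "Del * (D + 2 * (M/5)^2) \<ge> - (77 * M / 1875) * (M + M/25)"
  proof -
    have "Del * (D + 2 * (M/5)^2) \<ge> - (77 * M / 1875) * (D + 2 * (M/5)^2)"
      using DelB DM by (intro mult_right_mono) auto
    moreover have "- (77 * M / 1875) * (D + 2 * (M/5)^2) \<ge> - (77 * M / 1875) * (M + M/25)"
      using s0 MP by (intro mult_left_mono_neg) auto
    ultimately show ?thesis by linarith
  qed
  have s2: "E * (2 * (M/5)^2) \<ge> 2/3 * (2 * (M/5)^2)" using Eb by (intro mult_right_mono) auto
  have s3: "- (77 * M / 1875) * (M + M/25) + 2/3 * (2 * (M/5)^2) > 0"
    using MP by (simp add: power2_eq_square field_simps)
  have "FF N q > E * D" using FFq s1 s2 s3 by linarith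
  then show False using pmax[OF qK] by (simp add: FF_def E_def D_def)
qed


lemma foc:
  assumes a: "a \<in> {1..N}" and b: "b \<in> {1..N}" and ab: "a \<noteq> b"
  shows "diseq_SQ N p * ln (p a) - 2 * Ent N p * p a = diseq_SQ N p * ln (p b) - 2 * Ent N p * p b"
proof -
  define E where "E = Ent N p"
  define D where "D = diseq_SQ N p"
  have pa: "p a > 0" and pb: "p b > 0" using pos a b by auto
  define d where "d = min (p a) (p b)"
  have d0: "d > 0" using pa pb by (simp add: d_def)
  define f where "f = (\<lambda>t. (E + p a * ln (p a) + p b * ln (p b) - (p a + t) * ln (p a + t) - (p b - t) * ln (p b - t))
      * (D - (p a - 1 / real N)^2 - (p b - 1 / real N)^2 + (p a + t - 1 / real N)^2 + (p b - t - 1 / real N)^2))"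
  have le: "\<forall>y. \<bar>0 - y\<bar> < d \<longrightarrow> f y \<le> f 0"
  proof (intro allI impI)
    fix y assume "\<bar>0 - y\<bar> < d"
    then have y: "- p a < y" "y < p b" by (auto simp: d_def)
    have s: "p a + p b \<le> 1" using pair_le[OF a b ab] .
    have qK: "p(a := p a + y, b := p b - y) \<in> Kset N"
      by (rule Kset_upd[OF pK a b ab]) (use y s in auto)
    have "f y = FF N (p(a := p a + y, b := p b - y))"
      by (simp add: f_def FF_def Ent_upd[OF a b ab] D_upd[OF a b ab] E_def D_def)
    moreover have "f 0 = FF N p" by (simp add: f_def FF_def E_def D_def)
    ultimately show "f y \<le> f 0" using pmax[OF qK] by simp
  qed
  have d1: "DERIV (\<lambda>t. (p a + t) * ln (p a + t)) 0 :> ln (p a) + 1"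
    using pa by (auto intro!: derivative_eq_intros)
  have d2: "DERIV (\<lambda>t. (p b - t) * ln (p b - t)) 0 :> - (ln (p b) + 1)"
    using pb by (auto intro!: derivative_eq_intros)
  have d3: "DERIV (\<lambda>t. (p a + t - 1 / real N)^2) 0 :> 2 * (p a - 1 / real N)"
    by (auto intro!: derivative_eq_intros)
  have d4: "DERIV (\<lambda>t. (p b - t - 1 / real N)^2) 0 :> - (2 * (p b - 1 / real N))"
    by (auto intro!: derivative_eq_intros)
  have dg: "DERIV (\<lambda>t. E + p a * ln (p a) + p b * ln (p b) - (p a + t) * ln (p a + t) - (p b - t) * ln (p b - t)) 0
      :> 0 - (ln (p a) + 1) - (- (ln (p b) + 1))"
    by (rule DERIV_diff[OF DERIV_diff[OF DERIV_const d1] d2])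
  have dh: "DERIV (\<lambda>t. D - (p a - 1 / real N)^2 - (p b - 1 / real N)^2 + (p a + t - 1 / real N)^2 + (p b - t - 1 / real N)^2) 0
      :> 0 + 2 * (p a - 1 / real N) + (- (2 * (p b - 1 / real N)))"
    by (rule DERIV_add[OF DERIV_add[OF DERIV_const d3] d4])
  have der: "DERIV f 0 :> (0 - (ln (p a) + 1) - (- (ln (p b) + 1))) * (D - (p a - 1 / real N)^2 - (p b - 1 / real N)^2 + (p a + 0 - 1 / real N)^2 + (p b - 0 - 1 / real N)^2)
     + (0 + 2 * (p a - 1 / real N) + (- (2 * (p b - 1 / real N)))) * (E + p a * ln (p a) + p b * ln (p b) - (p a + 0) * ln (p a + 0) - (p b - 0) * ln (p b - 0))"
    unfolding f_def by (rule DERIV_mult[OF dg dh])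
  have "(0 - (ln (p a) + 1) - (- (ln (p b) + 1))) * (D - (p a - 1 / real N)^2 - (p b - 1 / real N)^2 + (p a + 0 - 1 / real N)^2 + (p b - 0 - 1 / real N)^2)
     + (0 + 2 * (p a - 1 / real N) + (- (2 * (p b - 1 / real N)))) * (E + p a * ln (p a) + p b * ln (p b) - (p a + 0) * ln (p a + 0) - (p b - 0) * ln (p b - 0)) = 0"
    by (rule DERIV_local_max[OF der d0 le])
  then have "(ln (p b) - ln (p a)) * D + 2 * (p a - p b) * E = 0" by (simp add: algebra_simps)
  then show ?thesis unfolding E_def[symmetric] D_def[symmetric] by (simp add: algebra_simps)
qed

lemma others:
  assumes k: "k \<in> {1..N}" "p k = M" and i: "i \<in> {1..N}" "i \<noteq> k" and j: "j \<in> {1..N}" "j \<noteq> k"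
  shows "p i = p j"
proof -
  define E where "E = Ent N p"
  define D where "D = diseq_SQ N p"
  have E0: "E > 0" and D0: "D > 0" using E_pos D_pos by (simp_all add: E_def D_def)
  have aux: False if x: "x \<in> {1..N}" "x \<noteq> k" and y: "y \<in> {1..N}" "y \<noteq> k" and lt: "p x < p y" for x y
  proof -
    have px: "p x > 0" and py: "p y > 0" using pos x y by auto
    have pyM: "p y < M" using uniq[OF k y] .
    have xy: "x \<noteq> y" using lt by auto
    have f1: "D * ln (p x) - 2 * E * p x = D * ln (p y) - 2 * E * p y"
      using foc[OF x(1) y(1) xy] by (simp add: E_def D_def)
    have f2: "D * ln (p y) - 2 * E * p y = D * ln M - 2 * E * M"
      using foc[OF y(1) k(1) y(2)] k(2) by (simp add: E_def D_def)
    have s1: "ln (p x) - ln (p y) < (p x - p y) / p y"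
    proof -
      have "ln (p x / p y) < p x / p y - 1" using px py lt by (intro ln_strict) auto
      then show ?thesis using px py by (simp add: ln_divide_pos diff_divide_distrib)
    qed
    have s2: "ln M - ln (p y) < (M - p y) / p y"
    proof -
      have "ln (M / p y) < M / p y - 1" using M_pos py pyM by (intro ln_strict) auto
      then show ?thesis using M_pos py by (simp add: ln_divide_pos diff_divide_distrib)
    qed
    have g1: "D * (ln (p y) - ln (p x)) = 2 * E * (p y - p x)" using f1 by (simp add: algebra_simps)
    have g2: "D * (ln M - ln (p y)) = 2 * E * (M - p y)" using f2 by (simp add: algebra_simps)
    have "(p y - p x) / p y = - ((p x - p y) / p y)" by (simp add: minus_divide_left)
    then have s1': "(p y - p x) / p y < ln (p y) - ln (p x)" using s1 by linarith
    have "D * ((p y - p x) / p y) < D * (ln (p y) - ln (p x))" using s1' D0 by (intro mult_strict_left_mono) auto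
    then have h1: "D * ((p y - p x) / p y) < 2 * E * (p y - p x)" using g1 by linarith
    have eq1: "(D / p y) * (p y - p x) = D * ((p y - p x) / p y)" by simp
    have h1': "(D / p y) * (p y - p x) < (2 * E) * (p y - p x)" using h1 eq1 by linarith
    have pos1: "0 < p y - p x" using lt by simp
    have c1: "D / p y < 2 * E" using mult_less_cancel_right_pos[OF pos1, of "D / p y" "2 * E"] h1' by blast
    have "D * (ln M - ln (p y)) < D * ((M - p y) / p y)" using s2 D0 by (intro mult_strict_left_mono) auto
    then have h2: "2 * E * (M - p y) < D * ((M - p y) / p y)" using g2 by linarith
    have eq2: "(D / p y) * (M - p y) = D * ((M - p y) / p y)" by simp
    have h2': "(2 * E) * (M - p y) < (D / p y) * (M - p y)" using h2 eq2 by linarith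
    have pos2: "0 < M - p y" using pyM by simp
    have c2: "2 * E < D / p y" using mult_less_cancel_right_pos[OF pos2, of "2 * E" "D / p y"] h2' by blast
    show False using c1 c2 by linarith
  qed
  show ?thesis
  proof (rule ccontr)
    assume "p i \<noteq> p j"
    then consider "p i < p j" | "p j < p i" by linarith
    then show False
    proof cases
      case 1 then show ?thesis using aux[OF i j] by blast
    next
      case 2 then show ?thesis using aux[OF j i] by blast
    qed
  qed
qed

lemma max_structure: "\<exists>k\<in>{1..N}. \<forall>i\<in>{1..N}. i \<noteq> k \<longrightarrow> p i = (1 - p k) / (real N - 1)"
proof -
  obtain k where k: "k \<in> {1..N}" "p k = M" using M_attained by blast
  define j0 where "j0 = (if k = 1 then 2 else 1::nat)"
  have j0: "j0 \<in> {1..N}" "j0 \<noteq> k" using N2 k by (auto simp: j0_def)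
  define c where "c = p j0"
  have oth: "p i = c" if "i \<in> {1..N} - {k}" for i
    using others[OF k, of i j0] that j0 by (simp add: c_def)
  have "1 = (\<Sum>i=1..N. p i)" using psum by simp
  also have "\<dots> = p k + (\<Sum>i\<in>{1..N} - {k}. p i)" using k by (simp add: sum.remove)
  also have "(\<Sum>i\<in>{1..N} - {k}. p i) = (\<Sum>i\<in>{1..N} - {k}. c)" using oth by (rule sum.cong[OF refl])
  also have "\<dots> = real (N - 1) * c" using k by simp
  also have "real (N - 1) = real N - 1" using N2 by simp
  finally have "1 = p k + (real N - 1) * c" .
  moreover have "real N - 1 > 0" using N2 by simp
  ultimately have "c = (1 - p k) / (real N - 1)" by (simp add: field_simps)
  then show ?thesis using oth k by blast
qed

end


lemma complexity_cong:
  assumes "\<forall>i\<in>{1..N}. f i = g i"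
  shows "complexity_SQ N f = complexity_SQ N g"
proof -
  have "(\<Sum>i=1..N. xlogx (f i)) = (\<Sum>i=1..N. xlogx (g i))" using assms by (intro sum.cong) auto
  moreover have "(\<Sum>i=1..N. (f i - 1 / real N)^2) = (\<Sum>i=1..N. (g i - 1 / real N)^2)" using assms by (intro sum.cong) auto
  ultimately show ?thesis by (simp add: complexity_SQ_def norm_entropy_def diseq_SQ_def)
qed

theorem lemma3:
  fixes N :: nat
  assumes "N \<ge> 2"
  shows "\<exists>k\<in>{1..N}. \<exists>pmax\<in>{0..1::real}.
           (\<lambda>i. if i = k then pmax else (1 - pmax) / (real N - 1)) \<in> prob_simplex N \<and>
           (\<forall>p\<in>prob_simplex N.
              complexity_SQ N p \<le> complexity_SQ N (\<lambda>i. if i = k then pmax else (1 - pmax) / (real N - 1)))"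
proof -
  obtain p where pK: "p \<in> Kset N" and pm: "\<forall>q\<in>Kset N. complexity_SQ N q \<le> complexity_SQ N p"
    using exists_max[of N] assms by auto
  have lnN: "ln (real N) > 0" using assms by simp
  have FFm: "FF N q \<le> FF N p" if "q \<in> Kset N" for q
  proof -
    have "FF N q / ln (real N) \<le> FF N p / ln (real N)" using pm that by (simp add: complexity_FF)
    then show ?thesis using lnN by (simp add: divide_le_cancel)
  qed
  interpret mx N p using assms pK FFm by unfold_locales auto
  obtain k where k: "k \<in> {1..N}" and oth: "\<forall>i\<in>{1..N}. i \<noteq> k \<longrightarrow> p i = (1 - p k) / (real N - 1)"
    using max_structure by blast
  define f where "f = (\<lambda>i. if i = k then p k else (1 - p k) / (real N - 1))"
  have agree: "\<forall>i\<in>{1..N}. f i = p i" using oth by (auto simp: f_def)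
  have fS: "f \<in> prob_simplex N"
  proof -
    have "(\<Sum>i=1..N. f i) = (\<Sum>i=1..N. p i)" using agree by (intro sum.cong) auto
    then show ?thesis using agree pK by (auto simp: prob_simplex_def Kset_def)
  qed
  have allq: "complexity_SQ N q \<le> complexity_SQ N f" if q: "q \<in> prob_simplex N" for q
  proof -
    define q' where "q' = (\<lambda>i. if i \<in> {1..N} then q i else 0)"
    have ag: "\<forall>i\<in>{1..N}. q i = q' i" by (simp add: q'_def)
    have "(\<Sum>i=1..N. q' i) = (\<Sum>i=1..N. q i)" using ag by (intro sum.cong) auto
    then have "q' \<in> Kset N" using q by (auto simp: prob_simplex_def Kset_def q'_def)
    then have "complexity_SQ N q' \<le> complexity_SQ N p" using pm by blast
    moreover have "complexity_SQ N q = complexity_SQ N q'" by (rule complexity_cong[OF ag])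
    moreover have "complexity_SQ N f = complexity_SQ N p" by (rule complexity_cong[OF agree])
    ultimately show ?thesis by simp
  qed
  have pk01: "p k \<in> {0..1}" using p01[OF k] by simp
  show ?thesis
    using k pk01 fS allq unfolding f_def by blast
qed

end
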